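(* Let $(P,\mathcal{B})$ be a pairwise balanced design with $n\ge 2$ points, and let $\tau$ be the maximum size of a block in $\mathcal{B}$. Then \[\sum_{B\in\mathcal{B}}|B|\ \ge\ \frac{n(n-1)}{\tau-1}.\] Moreover, if $\mathcal{B}$ contains a block of size $k$, then \[\sum_{B\in\mathcal{B}}|B|\ \ge\ (n+1)k-\frac{k^2(k-1)}{n-1}\qquad\text{and}\qquad \sum_{B\in\mathcal{B}}|B|\ \ge\ k-\frac{(n-k)(n-5k-1)}{2}.\] Finally, for every integer $k$ with $n/2\le k\le n$, there exists a pairwise balanced design on $n$ points having a block of size $k$ for which $\sum_{B\in\mathcal{B}}|B| = k-\frac{(n-k)(n-5k-1)}{2}$.
   Context: A pairwise balanced design (PBD) is a pair $(P,\mathcal{B})$ where $P$ is a finite set of points and $\mathcal{B}$ is a family of subsets of $P$ (blocks) such that every two distinct points of $P$ lie in exactly one block. *)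

theory Defs
  imports Complex_Main
begin

definition PBD :: "'a set \<Rightarrow> 'a set set \<Rightarrow> bool" where
  "PBD P \<B> \<longleftrightarrow> finite P \<and> (\<forall>B\<in>\<B>. B \<subseteq> P) \<and>
     (\<forall>x\<in>P. \<forall>y\<in>P. x \<noteq> y \<longrightarrow> (\<exists>!B. B \<in> \<B> \<and> x \<in> B \<and> y \<in> B))"

end

theory Submission
  imports Defs
begin


definition offd :: "'a set \<Rightarrow> ('a\<times>'a) set" where
  "offd A = {p\<in>A\<times>A. fst p \<noteq> snd p}"

lemma card_offd:
  assumes "finite A" shows "card (offd A) + card A = card A * card A"
proof -
  have e: "A \<times> A = offd A \<union> (\<lambda>x. (x,x)) ` A" by (auto simp: offd_def)
  have d: "offd A \<inter> (\<lambda>x. (x,x)) ` A = {}" by (auto simp: offd_def)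
  have c: "card ((\<lambda>x. (x,x)) ` A) = card A" by (simp add: card_image inj_on_def)
  have f: "finite (offd A)" using assms by (metis finite_SigmaI finite_subset e Un_upper1)
  have "card (A \<times> A) = card (offd A) + card ((\<lambda>x. (x,x)) ` A)"
    unfolding e using f assms d by (simp add: card_Un_disjoint)
  then show ?thesis using c by (simp add: card_cartesian_product)
qed

lemma card_offd_real:
  assumes "finite A" shows "real (card (offd A)) = real (card A)^2 - real (card A)"
proof -
  have "real (card (offd A) + card A) = real (card A * card A)" using card_offd[OF assms] by simp
  then show ?thesis by (simp add: power2_eq_square)
qed

lemma pbd_fin: "PBD P \<B> \<Longrightarrow> finite \<B>"
  unfolding PBD_def by (meson Pow_iff finite_Pow_iff finite_subset subsetI)

lemma pbd_blk_fin: "PBD P \<B> \<Longrightarrow> B \<in> \<B> \<Longrightarrow> finite B"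
  unfolding PBD_def by (meson finite_subset)

lemma pbd_pairs:
  assumes "PBD P \<B>"
  shows "(\<Sum>B\<in>\<B>. card (offd B \<inter> R)) = card (offd P \<inter> R)"
proof -
  have fin: "finite \<B>" using pbd_fin[OF assms] .
  have sub: "\<forall>B\<in>\<B>. B \<subseteq> P" and uq: "\<forall>x\<in>P. \<forall>y\<in>P. x \<noteq> y \<longrightarrow> (\<exists>!B. B \<in> \<B> \<and> x \<in> B \<and> y \<in> B)"
    using assms unfolding PBD_def by auto
  have eq: "offd P \<inter> R = (\<Union>B\<in>\<B>. offd B \<inter> R)"
  proof
    show "offd P \<inter> R \<subseteq> (\<Union>B\<in>\<B>. offd B \<inter> R)"
    proof
      fix p assume p: "p \<in> offd P \<inter> R"
      obtain x y where xy: "p = (x,y)" by (cases p)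
      have "x \<in> P" "y \<in> P" "x \<noteq> y" using p xy by (auto simp: offd_def)
      then obtain B where "B \<in> \<B>" "x \<in> B" "y \<in> B" using uq by blast
      then show "p \<in> (\<Union>B\<in>\<B>. offd B \<inter> R)" using p xy by (auto simp: offd_def)
    qed
    show "(\<Union>B\<in>\<B>. offd B \<inter> R) \<subseteq> offd P \<inter> R" using sub by (auto simp: offd_def)
  qed
  have disj: "\<forall>B\<in>\<B>. \<forall>B'\<in>\<B>. B \<noteq> B' \<longrightarrow> (offd B \<inter> R) \<inter> (offd B' \<inter> R) = {}"
  proof (intro ballI impI)
    fix B B' assume b: "B \<in> \<B>" "B' \<in> \<B>" "B \<noteq> B'"
    show "(offd B \<inter> R) \<inter> (offd B' \<inter> R) = {}"
    proof (rule ccontr)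
      assume "(offd B \<inter> R) \<inter> (offd B' \<inter> R) \<noteq> {}"
      then obtain x y where "x \<in> B" "y \<in> B" "x \<in> B'" "y \<in> B'" "x \<noteq> y" by (auto simp: offd_def)
      moreover have "x \<in> P" "y \<in> P" using sub b \<open>x \<in> B\<close> \<open>y \<in> B\<close> by auto
      ultimately show False using uq b by metis
    qed
  qed
  have fins: "\<forall>B\<in>\<B>. finite (offd B \<inter> R)"
  proof
    fix B assume "B \<in> \<B>"
    then have "finite B" using pbd_blk_fin[OF assms] by blast
    moreover have "offd B \<inter> R \<subseteq> B \<times> B" by (auto simp: offd_def)
    ultimately show "finite (offd B \<inter> R)" by (meson finite_SigmaI finite_subset)
  qed
  show ?thesis unfolding eq by (rule card_UN_disjoint[OF fin fins disj, symmetric])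
qed

lemma pbd_sq:
  assumes "PBD P \<B>"
  shows "(\<Sum>B\<in>\<B>. real (card B)^2 - real (card B)) = real (card P)^2 - real (card P)"
proof -
  have "(\<Sum>B\<in>\<B>. card (offd B \<inter> UNIV)) = card (offd P \<inter> UNIV)" by (rule pbd_pairs[OF assms])
  then have "real (\<Sum>B\<in>\<B>. card (offd B)) = real (card (offd P))" by simp
  moreover have "finite P" using assms unfolding PBD_def by auto
  moreover have "(\<Sum>B\<in>\<B>. real (card (offd B))) = (\<Sum>B\<in>\<B>. real (card B)^2 - real (card B))"
    using card_offd_real pbd_blk_fin[OF assms] by (intro sum.cong) auto
  ultimately show ?thesis using card_offd_real by (simp add: of_nat_sum)
qed

lemma pbd_cross:
  assumes "PBD P \<B>" "B0 \<in> \<B>"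
  shows "(\<Sum>B\<in>\<B>. real (card (B \<inter> B0)) * real (card (B - B0))) = real (card B0) * real (card (P - B0))"
proof -
  have sub: "\<forall>B\<in>\<B>. B \<subseteq> P" using assms unfolding PBD_def by auto
  have "(\<Sum>B\<in>\<B>. card (offd B \<inter> (B0 \<times> (P - B0)))) = card (offd P \<inter> (B0 \<times> (P - B0)))" by (rule pbd_pairs[OF assms(1)])
  moreover have "\<And>B. B \<in> \<B> \<Longrightarrow> offd B \<inter> (B0 \<times> (P - B0)) = (B \<inter> B0) \<times> (B - B0)"
    using sub by (auto simp: offd_def)
  moreover have "offd P \<inter> (B0 \<times> (P - B0)) = B0 \<times> (P - B0)" using sub assms(2) by (auto simp: offd_def)
  ultimately have "(\<Sum>B\<in>\<B>. card ((B \<inter> B0) \<times> (B - B0))) = card (B0 \<times> (P - B0))" by simp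
  then have "real (\<Sum>B\<in>\<B>. card (B \<inter> B0) * card (B - B0)) = real (card B0 * card (P - B0))"
    by (simp add: card_cartesian_product)
  then show ?thesis by (simp add: of_nat_sum)
qed

lemma pbd_out:
  assumes "PBD P \<B>" "B0 \<in> \<B>"
  shows "(\<Sum>B\<in>\<B>. real (card (B - B0))^2 - real (card (B - B0))) = real (card (P - B0))^2 - real (card (P - B0))"
proof -
  have sub: "\<forall>B\<in>\<B>. B \<subseteq> P" using assms unfolding PBD_def by auto
  have fP: "finite P" using assms unfolding PBD_def by auto
  have "(\<Sum>B\<in>\<B>. card (offd B \<inter> ((P - B0) \<times> (P - B0)))) = card (offd P \<inter> ((P - B0) \<times> (P - B0)))" by (rule pbd_pairs[OF assms(1)])
  moreover have "\<And>B. B \<in> \<B> \<Longrightarrow> offd B \<inter> ((P - B0) \<times> (P - B0)) = offd (B - B0)"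
    using sub by (auto simp: offd_def)
  moreover have "offd P \<inter> ((P - B0) \<times> (P - B0)) = offd (P - B0)" by (auto simp: offd_def)
  ultimately have "(\<Sum>B\<in>\<B>. card (offd (B - B0))) = card (offd (P - B0))" by simp
  then have "real (\<Sum>B\<in>\<B>. card (offd (B - B0))) = real (card (offd (P - B0)))" by simp
  moreover have "(\<Sum>B\<in>\<B>. real (card (offd (B - B0)))) = (\<Sum>B\<in>\<B>. real (card (B - B0))^2 - real (card (B - B0)))"
    using card_offd_real pbd_blk_fin[OF assms(1)] by (intro sum.cong) auto
  moreover have "real (card (offd (P - B0))) = real (card (P - B0))^2 - real (card (P - B0))"
    using card_offd_real fP by blast
  ultimately show ?thesis by (simp add: of_nat_sum)
qed

lemma pbd_meet:
  assumes "PBD P \<B>" "B0 \<in> \<B>" "B \<in> \<B>" "B \<noteq> B0"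
  shows "card (B \<inter> B0) \<le> 1"
proof -
  have sub: "\<forall>B\<in>\<B>. B \<subseteq> P" and uq: "\<forall>x\<in>P. \<forall>y\<in>P. x \<noteq> y \<longrightarrow> (\<exists>!B. B \<in> \<B> \<and> x \<in> B \<and> y \<in> B)"
    using assms unfolding PBD_def by auto
  have "finite (B \<inter> B0)" using pbd_blk_fin[OF assms(1,3)] by simp
  moreover have "\<forall>x\<in>B \<inter> B0. \<forall>y\<in>B \<inter> B0. x = y"
  proof (intro ballI, rule ccontr)
    fix x y assume "x \<in> B \<inter> B0" "y \<in> B \<inter> B0" "x \<noteq> y"
    moreover have "x \<in> P" "y \<in> P" using sub assms(3) \<open>x \<in> B \<inter> B0\<close> \<open>y \<in> B \<inter> B0\<close> by auto
    ultimately show False using uq assms(2,3,4) by blast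
  qed
  ultimately show ?thesis using card_le_Suc0_iff_eq by (metis One_nat_def)
qed



lemma blk3: assumes "a \<le> (1::nat)" shows "real a + real b \<ge> 2 * real a * real b - (real b^2 - real b)/2"
proof (cases "a = 0")
  case True
  have "real b \<le> real b^2" by (cases b) (auto simp: power2_eq_square)
  then have "real b^2 - real b \<ge> 0" by linarith
  then have "(real b^2 - real b)/2 \<ge> 0" by simp
  have "2 * real a * real b - (real b^2 - real b)/2 = - ((real b^2 - real b)/2)" using True by simp
  also have "\<dots> \<le> 0" using \<open>(real b^2 - real b)/2 \<ge> 0\<close> by linarith
  also have "0 \<le> real a + real b" by simp
  finally show ?thesis .
next
  case False then have "a = 1" using assms by simp
  moreover have "(real b - 1) * (real b - 2) \<ge> 0"
  proof (cases "b \<le> 1")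
    case True then have "b = 0 \<or> b = 1" by auto
    then show ?thesis by auto
  next
    case False then have "real b \<ge> 2" by simp
    then show ?thesis by simp
  qed
  ultimately show ?thesis by (simp add: power2_eq_square algebra_simps field_simps)
qed

lemma blk2: assumes "a \<le> (1::nat)"
  shows "real a + real b \<ge> (1 + 2*s - s^2) * real a * real b - s^2 * (real b^2 - real b)"
proof (cases "a = 0")
  case True
  have "real b^2 - real b \<ge> 0" by (cases b) (auto simp: power2_eq_square)
  then have "s^2 * (real b^2 - real b) \<ge> 0" by simp
  then show ?thesis using True by simp
next
  case False then have "a = 1" using assms by simp
  have "(1 - s * real b)^2 \<ge> 0" by simp
  then show ?thesis using \<open>a = 1\<close> by (simp add: power2_eq_square algebra_simps)
qed

lemma part1:
  assumes "PBD P \<B>" "card P = n" "n \<ge> 2"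
  shows "real (\<Sum>B\<in>\<B>. card B) \<ge> real n * (real n - 1) / (real (Max (card ` \<B>)) - 1)"
proof -
  define t where "t = Max (card ` \<B>)"
  have fin: "finite \<B>" using pbd_fin[OF assms(1)] .
  have fP: "finite P" using assms(1) unfolding PBD_def by auto
  obtain x y where xy: "x \<in> P" "y \<in> P" "x \<noteq> y"
  proof -
    have "2 \<le> card P" using assms by simp
    then obtain A where "A \<subseteq> P" "card A = 2" by (meson obtain_subset_with_card_n)
    then obtain x y where "A = {x,y}" "x \<noteq> y" by (meson card_2_iff)
    then show ?thesis using that \<open>A \<subseteq> P\<close> by auto
  qed
  then obtain B where B: "B \<in> \<B>" "x \<in> B" "y \<in> B" using assms(1) unfolding PBD_def by metis
  have "card {x,y} \<le> card B" using B pbd_blk_fin[OF assms(1) B(1)] by (intro card_mono) auto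
  then have "2 \<le> card B" using xy by simp
  moreover have "card B \<le> t" unfolding t_def using fin B by simp
  ultimately have t2: "real t - 1 \<ge> 1" by simp
  have "\<And>B. B \<in> \<B> \<Longrightarrow> real (card B)^2 - real (card B) \<le> (real t - 1) * real (card B)"
  proof -
    fix B assume "B \<in> \<B>"
    then have "card B \<le> t" unfolding t_def using fin by simp
    then have "(real (card B) - 1) * real (card B) \<le> (real t - 1) * real (card B)"
      by (intro mult_right_mono) auto
    then show "real (card B)^2 - real (card B) \<le> (real t - 1) * real (card B)"
      by (simp add: power2_eq_square algebra_simps)
  qed
  then have "(\<Sum>B\<in>\<B>. real (card B)^2 - real (card B)) \<le> (\<Sum>B\<in>\<B>. (real t - 1) * real (card B))"
    by (rule sum_mono)
  then have "real n^2 - real n \<le> (real t - 1) * real (\<Sum>B\<in>\<B>. card B)"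
    using pbd_sq[OF assms(1)] assms(2) by (simp add: sum_distrib_left of_nat_sum)
  then have "real n * (real n - 1) \<le> real (\<Sum>B\<in>\<B>. card B) * (real t - 1)"
    by (simp add: power2_eq_square algebra_simps)
  then show ?thesis unfolding t_def[symmetric] using t2 by (simp add: pos_divide_le_eq)
qed

lemma split_sums:
  assumes "PBD P \<B>" "B0 \<in> \<B>"
  shows "real (\<Sum>B\<in>\<B>. card B) = real (card B0) + (\<Sum>B\<in>\<B>-{B0}. real (card (B \<inter> B0)) + real (card (B - B0)))"
    and "(\<Sum>B\<in>\<B>-{B0}. real (card (B \<inter> B0)) * real (card (B - B0))) = real (card B0) * real (card (P - B0))"
    and "(\<Sum>B\<in>\<B>-{B0}. real (card (B - B0))^2 - real (card (B - B0))) = real (card (P - B0))^2 - real (card (P - B0))"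
    and "card P = card B0 + card (P - B0)"
proof -
  have fin: "finite \<B>" using pbd_fin[OF assms(1)] .
  have fP: "finite P" and sub: "B0 \<subseteq> P" using assms unfolding PBD_def by auto
  have "real (\<Sum>B\<in>\<B>. card B) = (\<Sum>B\<in>\<B>. real (card (B \<inter> B0)) + real (card (B - B0)))"
    unfolding of_nat_sum using card_Int_Diff pbd_blk_fin[OF assms(1)] by (intro sum.cong) (auto simp del: of_nat_add simp add: of_nat_add[symmetric])
  also have "\<dots> = real (card B0) + (\<Sum>B\<in>\<B>-{B0}. real (card (B \<inter> B0)) + real (card (B - B0)))"
    using sum.remove[OF fin assms(2), of "\<lambda>B. real (card (B \<inter> B0)) + real (card (B - B0))"] by (simp add: Int_absorb)
  finally show "real (\<Sum>B\<in>\<B>. card B) = real (card B0) + (\<Sum>B\<in>\<B>-{B0}. real (card (B \<inter> B0)) + real (card (B - B0)))" .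
  show "(\<Sum>B\<in>\<B>-{B0}. real (card (B \<inter> B0)) * real (card (B - B0))) = real (card B0) * real (card (P - B0))"
    using pbd_cross[OF assms] sum.remove[OF fin assms(2), of "\<lambda>B. real (card (B \<inter> B0)) * real (card (B - B0))"] by simp
  show "(\<Sum>B\<in>\<B>-{B0}. real (card (B - B0))^2 - real (card (B - B0))) = real (card (P - B0))^2 - real (card (P - B0))"
    using pbd_out[OF assms] sum.remove[OF fin assms(2), of "\<lambda>B. real (card (B - B0))^2 - real (card (B - B0))"] by simp
  show "card P = card B0 + card (P - B0)" using fP sub card_Int_Diff[OF fP, of B0] by (simp add: Int_absorb1)
qed

lemma part23:
  assumes "PBD P \<B>" "card P = n" "n \<ge> 2" "B0 \<in> \<B>" "card B0 = k"
  shows "real (\<Sum>B\<in>\<B>. card B) \<ge> (real n + 1) * real k - (real k)^2 * (real k - 1) / (real n - 1)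
          \<and> real (\<Sum>B\<in>\<B>. card B) \<ge> real k - (real n - real k) * (real n - 5 * real k - 1) / 2"
proof -
  define m where "m = card (P - B0)"
  note S = split_sums[OF assms(1,4), unfolded assms(5) m_def[symmetric] assms(2)]
  have meet: "\<And>B. B \<in> \<B>-{B0} \<Longrightarrow> card (B \<inter> B0) \<le> 1" using pbd_meet[OF assms(1,4)] by blast
  define s where "s = real k / (real n - 1)"
  have "(\<Sum>B\<in>\<B>-{B0}. (1 + 2*s - s^2) * real (card (B \<inter> B0)) * real (card (B - B0)) - s^2 * (real (card (B - B0))^2 - real (card (B - B0))))
     \<le> (\<Sum>B\<in>\<B>-{B0}. real (card (B \<inter> B0)) + real (card (B - B0)))"
    using blk2 meet by (intro sum_mono) auto
  also have "(\<Sum>B\<in>\<B>-{B0}. (1 + 2*s - s^2) * real (card (B \<inter> B0)) * real (card (B - B0)) - s^2 * (real (card (B - B0))^2 - real (card (B - B0))))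
     = (1 + 2*s - s^2) * (real k * real m) - s^2 * (real m^2 - real m)"
    using S(2,3) by (simp add: sum_subtractf sum_distrib_left[symmetric] mult.assoc)
  finally have i2: "(1 + 2*s - s^2) * (real k * real m) - s^2 * (real m^2 - real m) \<le> real (\<Sum>B\<in>\<B>. card B) - real k"
    using S(1) by simp
  have "(\<Sum>B\<in>\<B>-{B0}. 2 * real (card (B \<inter> B0)) * real (card (B - B0)) - (real (card (B - B0))^2 - real (card (B - B0)))/2)
     \<le> (\<Sum>B\<in>\<B>-{B0}. real (card (B \<inter> B0)) + real (card (B - B0)))"
    using blk3 meet by (intro sum_mono) auto
  also have "(\<Sum>B\<in>\<B>-{B0}. 2 * real (card (B \<inter> B0)) * real (card (B - B0)) - (real (card (B - B0))^2 - real (card (B - B0)))/2)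
     = 2 * (real k * real m) - (real m^2 - real m)/2"
    using S(2,3) by (simp add: sum_subtractf sum_distrib_left[symmetric] sum_divide_distrib[symmetric] mult.assoc)
  finally have i3: "2 * (real k * real m) - (real m^2 - real m)/2 \<le> real (\<Sum>B\<in>\<B>. card B) - real k"
    using S(1) by simp
  have nk: "real n = real k + real m" using S(4) by simp
  have n1: "real n - 1 > 0" using assms(3) by simp
  have e2: "(real n + 1) * real k - (real k)^2 * (real k - 1) / (real n - 1) = real k + ((1 + 2*s - s^2) * (real k * real m) - s^2 * (real m^2 - real m))"
  proof -
    have sd: "s * (real n - 1) = real k" unfolding s_def using n1 by simp
    have a: "(real k)^2 * (real k - 1) / (real n - 1) = s * real k * (real k - 1)"
      unfolding s_def by (simp add: power2_eq_square)
    have b: "s * real k * real m + s * real k * (real k - 1) = real k * real k"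
    proof -
      have "s * real k * real m + s * real k * (real k - 1) = real k * (s * (real n - 1))"
        using nk by (simp add: algebra_simps)
      then show ?thesis using sd by simp
    qed
    have c: "(1 + 2*s - s^2) * (real k * real m) - s^2 * (real m^2 - real m) = real k * real m + 2 * s * real k * real m - s * (s * (real n - 1)) * real m"
      using nk by (simp add: algebra_simps power2_eq_square)
    show ?thesis unfolding a c sd using b nk by (simp add: algebra_simps)
  qed
  have e3: "real k - (real n - real k) * (real n - 5 * real k - 1) / 2 = real k + (2 * (real k * real m) - (real m^2 - real m)/2)"
    using nk by (simp add: field_simps power2_eq_square)
  show ?thesis using i2 i3 e2 e3 by linarith
qed



definition partner :: "nat \<Rightarrow> nat \<Rightarrow> nat \<Rightarrow> nat option" where
  "partner m x i = (if x < m \<and> x \<noteq> (2*i) mod m then Some ((x+m-i) mod m) else None)"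

definition blk :: "nat \<Rightarrow> nat \<Rightarrow> nat \<Rightarrow> nat \<Rightarrow> nat set" where
  "blk k m x i = {x, k+i} \<union> (case partner m x i of None \<Rightarrow> {} | Some j \<Rightarrow> {k+j})"

definition fam :: "nat \<Rightarrow> nat \<Rightarrow> nat set set" where
  "fam k m = insert {0..<k} {blk k m x i | x i. x < k \<and> i < m}"

lemma mod2: assumes "(a::nat) < 2*m" shows "a mod m = (if a < m then a else a - m)"
proof (cases "a < m")
  case False
  then have "a mod m = (a - m) mod m" by (simp add: le_mod_geq)
  also have "\<dots> = a - m" using assms False by (intro mod_less) linarith
  finally show ?thesis using False by simp
qed simp

lemma mod_char: "(a::nat) < 2*m \<Longrightarrow> c < m \<Longrightarrow> (a mod m = c \<longleftrightarrow> a = c \<or> a = c + m)"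
  using mod2[of a m] by auto

lemma partner_some:
  assumes "i < m" "partner m x i = Some j"
  shows "x < m \<and> j < m \<and> j \<noteq> i \<and> x = (i+j) mod m \<and> partner m x j = Some i"
proof -
  have x: "x < m" and x2: "(2*i) mod m \<noteq> x" and j: "(x+m-i) mod m = j"
    using assms by (auto simp: partner_def split: if_splits)
  have jm: "j < m" using j x by auto
  have jc: "x+m-i = j \<or> x+m-i = j + m" using mod_char[of "x+m-i" m j] j x assms(1) jm by linarith
  have ijc: "i + j = x \<or> i + j = x + m" using jc assms(1) by linarith
  have xi: "(i+j) mod m = x" using mod_char[of "i+j" m x] ijc x assms(1) jm by linarith
  have ji: "j \<noteq> i"
  proof
    assume "j = i"
    then have "(2*i) mod m = x" using mod_char[of "2*i" m x] ijc x assms(1) by auto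
    then show False using x2 by simp
  qed
  have x2j: "(2*j) mod m \<noteq> x"
  proof
    assume "(2*j) mod m = x"
    then have "2*j = x \<or> 2*j = x + m" using mod_char[of "2*j" m x] x jm by linarith
    then show False using ijc ji assms(1) jm by linarith
  qed
  have xj: "(x+m-j) mod m = i"
  proof -
    have "x+m-j = i \<or> x+m-j = i+m" using ijc jm x by linarith
    then show ?thesis using mod_char[of "x+m-j" m i] assms(1) x by linarith
  qed
  have "partner m x j = Some i" unfolding partner_def using x x2j xj by auto
  then show ?thesis using x jm ji xi by auto
qed

lemma partner_pair:
  assumes "i < m" "j < m" "i \<noteq> j"
  shows "partner m ((i+j) mod m) i = Some j"
proof -
  define x where "x = (i+j) mod m"
  have xm: "x < m" using assms x_def by simp
  have ijc: "i + j = x \<or> i + j = x + m" using mod_char[of "i+j" m x] x_def xm assms by linarith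
  have x2: "(2*i) mod m \<noteq> x"
  proof
    assume "(2*i) mod m = x"
    then have "2*i = x \<or> 2*i = x + m" using mod_char[of "2*i" m x] xm assms(1) by linarith
    then show False using ijc assms by linarith
  qed
  have xj: "(x+m-i) mod m = j"
  proof -
    have "x+m-i = j \<or> x+m-i = j+m" using ijc assms xm by linarith
    then show ?thesis using mod_char[of "x+m-i" m j] assms xm by linarith
  qed
  show ?thesis unfolding partner_def x_def[symmetric] using xm x2 xj by auto
qed



lemma blk_inner: "y \<in> blk k m x i \<Longrightarrow> y < k \<Longrightarrow> y = x"
  by (auto simp: blk_def split: option.splits)

lemma blk_outer:
  assumes "i < m" "x < k" "k + i' \<in> blk k m x i"
  shows "i' < m \<and> blk k m x i' = blk k m x i"
proof (cases "i' = i")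
  case True then show ?thesis using assms by simp
next
  case False
  show ?thesis
  proof (cases "partner m x i")
    case None
    then have "k + i' \<in> {x, k+i}" using assms by (simp add: blk_def)
    then show ?thesis using False assms(2) by auto
  next
    case (Some j)
    then have "k + i' \<in> {x, k+i, k+j}" using assms by (auto simp: blk_def)
    then have "i' = j" using False assms(2) by auto
    moreover have "j < m" "partner m x j = Some i" using partner_some[OF assms(1) Some] by auto
    ultimately show ?thesis using Some by (auto simp: blk_def)
  qed
qed

lemma blk_sub: "x < k \<Longrightarrow> i < m \<Longrightarrow> blk k m x i \<subseteq> {0..<k+m}"
  by (auto simp: blk_def split: option.splits dest: partner_some)

lemma key:
  assumes "C \<in> fam k m" "p \<in> C" "q \<in> C" "p \<noteq> q"
  shows "(p < k \<and> q < k \<longrightarrow> C = {0..<k})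
     \<and> (p < k \<and> k \<le> q \<longrightarrow> C = blk k m p (q-k))
     \<and> (k \<le> p \<and> k \<le> q \<longrightarrow> C = blk k m (((p-k)+(q-k)) mod m) (p-k))"
proof (cases "C = {0..<k}")
  case True then show ?thesis using assms by auto
next
  case False
  then obtain x i where C: "C = blk k m x i" "x < k" "i < m" using assms(1) by (auto simp: fam_def)
  have A: "\<not> (p < k \<and> q < k)" using blk_inner C assms by metis
  have B: "p < k \<and> k \<le> q \<longrightarrow> C = blk k m p (q-k)"
  proof
    assume h: "p < k \<and> k \<le> q"
    then have "p = x" using blk_inner C assms by metis
    moreover have "k + (q-k) \<in> blk k m x i" using h C assms by simp
    ultimately show "C = blk k m p (q-k)" using blk_outer[OF C(3) C(2)] C by metis
  qed
  have D: "k \<le> p \<and> k \<le> q \<longrightarrow> C = blk k m (((p-k)+(q-k)) mod m) (p-k)"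
  proof
    assume h: "k \<le> p \<and> k \<le> q"
    have "k + (p-k) \<in> blk k m x i" using h C assms by simp
    then have p1: "p - k < m" and e1: "C = blk k m x (p-k)" using blk_outer[OF C(3) C(2)] C by metis+
    have "k + (q-k) \<in> blk k m x (p-k)" using h e1 assms by simp
    moreover have "q - k \<noteq> p - k" using h assms by auto
    ultimately obtain j where "partner m x (p-k) = Some j" "k + (q-k) = k + j"
      using C(2) by (auto simp: blk_def split: option.splits)
    then have "x = ((p-k)+(q-k)) mod m" using partner_some[OF p1] by auto
    then show "C = blk k m (((p-k)+(q-k)) mod m) (p-k)" using e1 by simp
  qed
  show ?thesis using A B D by blast
qed



lemma fam_pbd:
  assumes "m \<le> k"
  shows "PBD {0..<k+m} (fam k m)"
  unfolding PBD_def
proof (intro conjI ballI impI)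
  show "finite {0..<k+m}" by simp
next
  fix B assume "B \<in> fam k m"
  then consider "B = {0..<k}" | x i where "B = blk k m x i" "x<k" "i<m" by (auto simp: fam_def)
  then show "B \<subseteq> {0..<k+m}"
  proof cases
    case 2 then show ?thesis using blk_sub[of x k i m] by simp
  qed auto
next
  fix p q assume pq: "p \<in> {0..<k+m}" "q \<in> {0..<k+m}" "p \<noteq> q"
  show "\<exists>!B. B \<in> fam k m \<and> p \<in> B \<and> q \<in> B"
  proof (cases "p < k")
    case pk: True
    show ?thesis
    proof (cases "q < k")
      case True
      show ?thesis
      proof (rule ex1I[of _ "{0..<k}"])
        show "{0..<k} \<in> fam k m \<and> p \<in> {0..<k} \<and> q \<in> {0..<k}" using pk True by (simp add: fam_def)
      next
        fix B assume "B \<in> fam k m \<and> p \<in> B \<and> q \<in> B"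
        then show "B = {0..<k}" using key[of B k m p q] pq pk True by blast
      qed
    next
      case False
      show ?thesis
      proof (rule ex1I[of _ "blk k m p (q-k)"])
        have "q - k < m" using False pq by auto
        then have "blk k m p (q-k) \<in> fam k m" using pk unfolding fam_def by blast
        moreover have "p \<in> blk k m p (q-k)" "q \<in> blk k m p (q-k)" using False by (auto simp: blk_def)
        ultimately show "blk k m p (q-k) \<in> fam k m \<and> p \<in> blk k m p (q-k) \<and> q \<in> blk k m p (q-k)" by blast
      next
        fix B assume "B \<in> fam k m \<and> p \<in> B \<and> q \<in> B"
        then show "B = blk k m p (q-k)" using key[of B k m p q] pq pk False by auto
      qed
    qed
  next
    case pk: False
    show ?thesis
    proof (cases "q < k")
      case True
      show ?thesis
      proof (rule ex1I[of _ "blk k m q (p-k)"])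
        have "p - k < m" using pk pq by auto
        then have "blk k m q (p-k) \<in> fam k m" using True unfolding fam_def by blast
        moreover have "q \<in> blk k m q (p-k)" "p \<in> blk k m q (p-k)" using pk by (auto simp: blk_def)
        ultimately show "blk k m q (p-k) \<in> fam k m \<and> p \<in> blk k m q (p-k) \<and> q \<in> blk k m q (p-k)" by blast
      next
        fix B assume "B \<in> fam k m \<and> p \<in> B \<and> q \<in> B"
        then show "B = blk k m q (p-k)" using key[of B k m q p] pq pk True by auto
      qed
    next
      case False
      define x where "x = ((p-k)+(q-k)) mod m"
      have i1: "p - k < m" "q - k < m" "p - k \<noteq> q - k" using pq pk False by auto
      then have xm: "x < m" unfolding x_def by simp
      have pa: "partner m x (p-k) = Some (q-k)" unfolding x_def using partner_pair[OF i1] .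
      show ?thesis
      proof (rule ex1I[of _ "blk k m x (p-k)"])
        have "x < k" using xm assms by simp
        then have "blk k m x (p-k) \<in> fam k m" using i1 unfolding fam_def by blast
        moreover have "p \<in> blk k m x (p-k)" "q \<in> blk k m x (p-k)" using pk False pa by (auto simp: blk_def)
        ultimately show "blk k m x (p-k) \<in> fam k m \<and> p \<in> blk k m x (p-k) \<and> q \<in> blk k m x (p-k)" by blast
      next
        fix B assume "B \<in> fam k m \<and> p \<in> B \<and> q \<in> B"
        then show "B = blk k m x (p-k)" unfolding x_def using key[of B k m p q] pq pk False by auto
      qed
    qed
  qed
qed

lemma fam_shape:
  assumes "C \<in> fam k m" "C \<noteq> {0..<k}"
  shows "card (C \<inter> {0..<k}) = 1 \<and> (card (C - {0..<k}) = 1 \<or> card (C - {0..<k}) = 2)"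
proof -
  obtain x i where C: "C = blk k m x i" "x < k" "i < m" using assms by (auto simp: fam_def)
  have "C \<inter> {0..<k} = {x}" using C by (auto simp: blk_def split: option.splits)
  moreover have "card (C - {0..<k}) = 1 \<or> card (C - {0..<k}) = 2"
  proof (cases "partner m x i")
    case None
    then have "C - {0..<k} = {k+i}" using C by (auto simp: blk_def)
    then show ?thesis by simp
  next
    case (Some j)
    then have "j \<noteq> i" using partner_some[OF C(3)] by auto
    moreover have "C - {0..<k} = {k+i, k+j}" using C Some by (auto simp: blk_def)
    ultimately show ?thesis by simp
  qed
  ultimately show ?thesis by simp
qed

lemma construction:
  assumes "m \<le> k"
  shows "PBD {0..<k+m} (fam k m) \<and> card {0..<k+m} = k + m \<and> (\<exists>C\<in>fam k m. card C = k) \<and>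
    real (\<Sum>C\<in>fam k m. card C) = real k + 2 * real k * real m - (real m ^ 2 - real m) / 2"
proof -
  note pbd = fam_pbd[OF assms]
  have b0: "{0..<k} \<in> fam k m" by (simp add: fam_def)
  note S = split_sums[OF pbd b0]
  have dif: "card ({0..<k+m} - {0..<k}) = m" by simp
  have "(\<Sum>B\<in>fam k m-{{0..<k}}. real (card (B \<inter> {0..<k})) + real (card (B - {0..<k})))
     = (\<Sum>B\<in>fam k m-{{0..<k}}. 2 * (real (card (B \<inter> {0..<k})) * real (card (B - {0..<k}))) - (real (card (B - {0..<k}))^2 - real (card (B - {0..<k})))/2)"
  proof (rule sum.cong)
    fix B assume "B \<in> fam k m-{{0..<k}}"
    then have "card (B \<inter> {0..<k}) = 1 \<and> (card (B - {0..<k}) = 1 \<or> card (B - {0..<k}) = 2)"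
      using fam_shape by blast
    then show "real (card (B \<inter> {0..<k})) + real (card (B - {0..<k})) = 2 * (real (card (B \<inter> {0..<k})) * real (card (B - {0..<k}))) - (real (card (B - {0..<k}))^2 - real (card (B - {0..<k})))/2"
      by (auto simp: power2_eq_square)
  qed simp
  also have "\<dots> = 2 * (real k * real m) - (real m^2 - real m)/2"
    using S(2,3) dif by (simp add: sum_subtractf sum_distrib_left[symmetric] sum_divide_distrib[symmetric])
  moreover have "\<exists>C\<in>fam k m. card C = k" using b0 by (intro bexI[of _ "{0..<k}"]) auto
  ultimately show ?thesis using S(1) pbd by auto
qed


theorem mainTheorem5:
  fixes P :: "'a set" and \<B> :: "'a set set" and n :: nat
  assumes "PBD P \<B>" and "card P = n" and "n \<ge> 2"
  shows "real (\<Sum>B\<in>\<B>. card B) \<ge> real n * (real n - 1) / (real (Max (card ` \<B>)) - 1)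
       \<and> (\<forall>k. (\<exists>B\<in>\<B>. card B = k) \<longrightarrow>
            real (\<Sum>B\<in>\<B>. card B) \<ge> (real n + 1) * real k - (real k)^2 * (real k - 1) / (real n - 1)
          \<and> real (\<Sum>B\<in>\<B>. card B) \<ge> real k - (real n - real k) * (real n - 5 * real k - 1) / 2)
       \<and> (\<forall>k::nat. real n / 2 \<le> real k \<and> k \<le> n \<longrightarrow>
            (\<exists>(Q :: nat set) \<C>. PBD Q \<C> \<and> card Q = n \<and> (\<exists>C\<in>\<C>. card C = k) \<and>
               real (\<Sum>C\<in>\<C>. card C) = real k - (real n - real k) * (real n - 5 * real k - 1) / 2))"
proof (intro conjI allI impI)
  show "real (\<Sum>B\<in>\<B>. card B) \<ge> real n * (real n - 1) / (real (Max (card ` \<B>)) - 1)"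
    by (rule part1[OF assms])
next
  fix k assume "\<exists>B\<in>\<B>. card B = k"
  then obtain B0 where "B0 \<in> \<B>" "card B0 = k" by blast
  note r = part23[OF assms this]
  show "real (\<Sum>B\<in>\<B>. card B) \<ge> (real n + 1) * real k - (real k)^2 * (real k - 1) / (real n - 1)"
    using r by blast
  show "real (\<Sum>B\<in>\<B>. card B) \<ge> real k - (real n - real k) * (real n - 5 * real k - 1) / 2"
    using r by blast
next
  fix k :: nat assume h: "real n / 2 \<le> real k \<and> k \<le> n"
  define m where "m = n - k"
  have nkm: "n = k + m" using h m_def by simp
  have mk: "m \<le> k" using h nkm by simp
  note c = construction[OF mk]
  have "real k + 2 * real k * real m - (real m ^ 2 - real m) / 2 = real k - (real n - real k) * (real n - 5 * real k - 1) / 2"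
    using nkm by (simp add: field_simps power2_eq_square)
  then show "\<exists>(Q :: nat set) \<C>. PBD Q \<C> \<and> card Q = n \<and> (\<exists>C\<in>\<C>. card C = k) \<and>
               real (\<Sum>C\<in>\<C>. card C) = real k - (real n - real k) * (real n - 5 * real k - 1) / 2"
    using c nkm by metis
qed

end
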